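(* Let $\mathcal A_1,\mathcal A_2,\dots,\mathcal A_d\subset 2^{[n]}$ be pairwise cross-IU, i.e. for all $i\neq j$ and all $A\in\mathcal A_i$, $B\in\mathcal A_j$ we have $A\cap B\neq\emptyset$ and $A\cup B\neq[n]$. Then $$\sum_{i=1}^d|\mathcal A_i|\le\max\{2^n,\ d\cdot 2^{n-2}\}.$$
   Context: $[n]=\{1,\dots,n\}$ and $2^{[n]}$ is its power set. *)

theory Defs
  imports Complex_Main
begin

definition cross_IU :: "nat \<Rightarrow> nat set set \<Rightarrow> nat set set \<Rightarrow> bool" where
  "cross_IU n \<A> \<B> \<longleftrightarrow> (\<forall>A\<in>\<A>. \<forall>B\<in>\<B>. A \<inter> B \<noteq> {} \<and> A \<union> B \<noteq> {1..n})"

end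

theory Submission imports Defs begin

definition upc :: "'a set \<Rightarrow> 'a set set \<Rightarrow> bool" where
  "upc S P \<longleftrightarrow> P \<subseteq> Pow S \<and> (\<forall>X\<in>P. \<forall>Y. X \<subseteq> Y \<and> Y \<subseteq> S \<longrightarrow> Y \<in> P)"
definition dnc :: "'a set \<Rightarrow> 'a set set \<Rightarrow> bool" where
  "dnc S Q \<longleftrightarrow> Q \<subseteq> Pow S \<and> (\<forall>X\<in>Q. \<forall>Y. Y \<subseteq> X \<longrightarrow> Y \<in> Q)"

lemma card_split:
  assumes "finite S" "a \<notin> S" "F \<subseteq> Pow (insert a S)"
  shows "card F = card {X\<in>F. a \<notin> X} + card {X\<in>Pow S. insert a X \<in> F}"
proof -
  have fin: "finite F" using assms(1,3) finite_subset by (metis finite_Pow_iff finite_insert)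
  have e: "{X\<in>F. a \<in> X} = insert a ` {X\<in>Pow S. insert a X \<in> F}"
  proof
    show "{X\<in>F. a \<in> X} \<subseteq> insert a ` {X\<in>Pow S. insert a X \<in> F}"
    proof
      fix X assume X: "X \<in> {X\<in>F. a \<in> X}"
      then have "X = insert a (X - {a})" "X - {a} \<in> Pow S" using assms(3) by auto
      then show "X \<in> insert a ` {X\<in>Pow S. insert a X \<in> F}" using X by (metis (mono_tags, lifting) image_eqI mem_Collect_eq)
    qed
  qed auto
  have inj: "inj_on (insert a) {X\<in>Pow S. insert a X \<in> F}"
  proof (rule inj_onI)
    fix x y assume "x \<in> {X\<in>Pow S. insert a X \<in> F}" "y \<in> {X\<in>Pow S. insert a X \<in> F}" "insert a x = insert a y"
    then have "a \<notin> x" "a \<notin> y" using assms(2) by auto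
    then show "x = y" using \<open>insert a x = insert a y\<close> by (metis Diff_insert_absorb)
  qed
  have "card F = card {X\<in>F. a \<notin> X} + card {X\<in>F. a \<in> X}"
    using fin by (subst card_Un_disjoint[symmetric]) (auto intro: arg_cong[where f=card])
  also have "card {X\<in>F. a \<in> X} = card {X\<in>Pow S. insert a X \<in> F}"
    unfolding e using inj by (simp add: card_image)
  finally show ?thesis .
qed

lemma arith_kl:
  fixes p0 p1 q0 q1 r0 r1 k :: nat
  assumes "k * r0 \<le> p0 * q0" "k * r1 \<le> p1 * q1" "p0 \<le> p1" "q1 \<le> q0"
  shows "2 * k * (r0 + r1) \<le> (p0 + p1) * (q0 + q1)"
proof -
  have "p0 * q0 + p1 * q1 \<le> p0 * q1 + p1 * q0"
  proof -
    obtain a where "p1 = p0 + a" using assms(3) le_Suc_ex by blast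
    moreover obtain b where "q0 = q1 + b" using assms(4) le_Suc_ex by blast
    ultimately show ?thesis by (simp add: algebra_simps)
  qed
  then show ?thesis using assms(1,2) by (simp add: algebra_simps)
qed

lemma kleitman:
  assumes "finite S"
  shows "upc S P \<Longrightarrow> dnc S Q \<Longrightarrow> 2 ^ card S * card (P \<inter> Q) \<le> card P * card Q"
  using assms
proof (induction S arbitrary: P Q rule: finite_induct)
  case empty
  have "P \<subseteq> {{}}" "Q \<subseteq> {{}}" using empty(1,2) unfolding upc_def dnc_def by auto
  then have "P = {} \<or> P = {{}}" "Q = {} \<or> Q = {{}}" by (auto simp: subset_singleton_iff)
  then show ?case by auto
next
  case (insert a S)
  define P0 where "P0 = {X\<in>P. a \<notin> X}"
  define P1 where "P1 = {X\<in>Pow S. insert a X \<in> P}"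
  define Q0 where "Q0 = {X\<in>Q. a \<notin> X}"
  define Q1 where "Q1 = {X\<in>Pow S. insert a X \<in> Q}"
  have PS: "P \<subseteq> Pow (insert a S)" "Q \<subseteq> Pow (insert a S)"
    using insert.prems unfolding upc_def dnc_def by auto
  have cP: "card P = card P0 + card P1" unfolding P0_def P1_def
    using card_split[OF insert(1,2) PS(1)] .
  have cQ: "card Q = card Q0 + card Q1" unfolding Q0_def Q1_def
    using card_split[OF insert(1,2) PS(2)] .
  have cPQ: "card (P \<inter> Q) = card (P0 \<inter> Q0) + card (P1 \<inter> Q1)"
  proof -
    have "card (P \<inter> Q) = card {X\<in>P \<inter> Q. a \<notin> X} + card {X\<in>Pow S. insert a X \<in> P \<inter> Q}"
      by (rule card_split[OF insert(1,2)]) (use PS in blast)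
    moreover have "{X\<in>P \<inter> Q. a \<notin> X} = P0 \<inter> Q0" unfolding P0_def Q0_def by auto
    moreover have "{X\<in>Pow S. insert a X \<in> P \<inter> Q} = P1 \<inter> Q1" unfolding P1_def Q1_def by auto
    ultimately show ?thesis by simp
  qed
  have uP0: "upc S P0" unfolding upc_def
  proof (intro conjI ballI allI impI)
    show "P0 \<subseteq> Pow S" using PS unfolding P0_def by auto
    fix X Y assume "X \<in> P0" "X \<subseteq> Y \<and> Y \<subseteq> S"
    then have "X \<in> P" "X \<subseteq> Y" "Y \<subseteq> insert a S" "a \<notin> Y" using insert.hyps(2) unfolding P0_def by auto
    then have "Y \<in> P" using insert.prems(1) unfolding upc_def by blast
    then show "Y \<in> P0" using \<open>a \<notin> Y\<close> unfolding P0_def by auto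
  qed
  have uP1: "upc S P1" unfolding upc_def
  proof (intro conjI ballI allI impI)
    show "P1 \<subseteq> Pow S" unfolding P1_def by auto
    fix X Y assume "X \<in> P1" "X \<subseteq> Y \<and> Y \<subseteq> S"
    then have "insert a X \<in> P" "insert a X \<subseteq> insert a Y" "insert a Y \<subseteq> insert a S"
      unfolding P1_def by auto
    then have "insert a Y \<in> P" using insert.prems(1) unfolding upc_def by blast
    then show "Y \<in> P1" using \<open>X \<subseteq> Y \<and> Y \<subseteq> S\<close> unfolding P1_def by auto
  qed
  have dQ0: "dnc S Q0" unfolding dnc_def
  proof (intro conjI ballI allI impI)
    show "Q0 \<subseteq> Pow S" using PS unfolding Q0_def by auto
    fix X Y assume "X \<in> Q0" "Y \<subseteq> X"
    then show "Y \<in> Q0" using insert.prems(2) unfolding dnc_def Q0_def by auto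
  qed
  have dQ1: "dnc S Q1" unfolding dnc_def
  proof (intro conjI ballI allI impI)
    show "Q1 \<subseteq> Pow S" unfolding Q1_def by auto
    fix X Y assume "X \<in> Q1" "Y \<subseteq> X"
    then have "insert a X \<in> Q" "insert a Y \<subseteq> insert a X" "X \<subseteq> S"
      unfolding Q1_def by auto
    then have "insert a Y \<in> Q" using insert.prems(2) unfolding dnc_def by blast
    then show "Y \<in> Q1" using \<open>Y \<subseteq> X\<close> \<open>X \<subseteq> S\<close> unfolding Q1_def by auto
  qed
  have "P0 \<subseteq> P1"
  proof
    fix X assume "X \<in> P0"
    then have "X \<in> P" "X \<subseteq> S" using PS unfolding P0_def by auto
    moreover have "X \<subseteq> insert a X" "insert a X \<subseteq> insert a S" using \<open>X \<subseteq> S\<close> by auto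
    ultimately have "insert a X \<in> P" using insert.prems(1) unfolding upc_def by blast
    then show "X \<in> P1" using \<open>X \<subseteq> S\<close> unfolding P1_def by auto
  qed
  moreover have "finite P1" unfolding P1_def using insert(1) by simp
  ultimately have le1: "card P0 \<le> card P1" by (intro card_mono)
  have "Q1 \<subseteq> Q0"
  proof
    fix X assume "X \<in> Q1"
    then have "insert a X \<in> Q" "X \<subseteq> S" unfolding Q1_def by auto
    moreover have "X \<subseteq> insert a X" by auto
    ultimately have "X \<in> Q" using insert.prems(2) unfolding dnc_def by blast
    then show "X \<in> Q0" using \<open>X \<subseteq> S\<close> insert.hyps(2) unfolding Q0_def by auto
  qed
  moreover have "finite Q0" unfolding Q0_def using PS(2) insert(1)
    by (metis (no_types, lifting) finite_Pow_iff finite_insert finite_subset mem_Collect_eq subsetI)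
  ultimately have le2: "card Q1 \<le> card Q0" by (intro card_mono)
  have "2 * 2 ^ card S * (card (P0 \<inter> Q0) + card (P1 \<inter> Q1)) \<le> (card P0 + card P1) * (card Q0 + card Q1)"
    by (rule arith_kl[OF insert.IH[OF uP0 dQ0] insert.IH[OF uP1 dQ1] le1 le2])
  then show ?case using cP cQ cPQ insert(1,2) by simp
qed


lemma arith_key:
  fixes p q r s :: nat
  assumes "s * r \<le> p * q" "2 * p \<le> s" "2 * q \<le> s" "s > 0"
  shows "4 * r \<le> p + q"
proof -
  have h1: "p * q \<le> s * q" using mult_right_mono[of "2*p" s q] assms(2)
    by (simp add: mult.assoc)
  have "2 * (p * q) \<le> s * q" using mult_right_mono[of "2*p" s q] assms(2) by (simp add: mult.assoc)
  moreover have "2 * (p * q) \<le> s * p" using mult_right_mono[of "2*q" s p] assms(3) by (simp add: mult.assoc mult.commute)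
  ultimately have "4 * (p * q) \<le> s * p + s * q" by linarith
  then have "4 * (p * q) \<le> s * (p + q)" by (simp add: distrib_left)
  then have "s * (4 * r) \<le> s * (p + q)" using assms(1) by (simp add: algebra_simps)
  then show ?thesis using assms(4) by simp
qed

lemma IU_nbhd:
  assumes fin: "finite S" and IS: "I \<subseteq> Pow S"
    and iu: "\<And>X Y. X \<in> I \<Longrightarrow> Y \<in> I \<Longrightarrow> X \<inter> Y \<noteq> {} \<and> X \<union> Y \<noteq> S"
  shows "3 * card I \<le> card {Y\<in>Pow S. \<exists>X\<in>I. X \<inter> Y = {} \<or> X \<union> Y = S}"
proof -
  define N where "N = {Y\<in>Pow S. \<exists>X\<in>I. X \<inter> Y = {} \<or> X \<union> Y = S}"
  define P where "P = {Y\<in>Pow S. \<exists>X\<in>I. X \<subseteq> Y}"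
  define Q where "Q = {Y\<in>Pow S. \<exists>X\<in>I. Y \<subseteq> X}"
  define c where "c = (\<lambda>Y. S - Y)"
  have injc: "inj_on c (Pow S)" unfolding c_def by (rule inj_onI) auto
  have finP: "finite (Pow S)" using fin by simp
  have uP: "upc S P" unfolding upc_def P_def by blast
  have dQ: "dnc S Q" unfolding dnc_def Q_def by blast
  have kl: "2 ^ card S * card (P \<inter> Q) \<le> card P * card Q" by (rule kleitman[OF fin uP dQ])
  have PPow: "P \<subseteq> Pow S" "Q \<subseteq> Pow S" unfolding P_def Q_def by auto
  have cPow: "c ` Pow S \<subseteq> Pow S" unfolding c_def by auto
  have disjP: "P \<inter> c ` P = {}"
  proof (rule ccontr)
    assume "P \<inter> c ` P \<noteq> {}"
    then obtain Y Z where "Z \<in> P" "Y \<in> P" "Z = S - Y" unfolding c_def by auto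
    then obtain X1 X2 where "X1 \<in> I" "X2 \<in> I" "X1 \<subseteq> Z" "X2 \<subseteq> Y" unfolding P_def by auto
    then have "X1 \<inter> X2 = {}" using \<open>Z = S - Y\<close> by auto
    then show False using iu[OF \<open>X1 \<in> I\<close> \<open>X2 \<in> I\<close>] by simp
  qed
  have disjQ: "Q \<inter> c ` Q = {}"
  proof (rule ccontr)
    assume "Q \<inter> c ` Q \<noteq> {}"
    then obtain Y Z where "Z \<in> Q" "Y \<in> Q" "Z = S - Y" unfolding c_def by auto
    then obtain X1 X2 where "X1 \<in> I" "X2 \<in> I" "Z \<subseteq> X1" "Y \<subseteq> X2" "X1 \<subseteq> S" "X2 \<subseteq> S"
      unfolding Q_def using IS by auto
    then have "X1 \<union> X2 = S" using \<open>Z = S - Y\<close> by auto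
    then show False using iu[OF \<open>X1 \<in> I\<close> \<open>X2 \<in> I\<close>] by simp
  qed
  have cardc: "\<And>F. F \<subseteq> Pow S \<Longrightarrow> card (c ` F) = card F"
    using injc by (meson card_image inj_on_subset)
  have "card P + card (c ` P) = card (P \<union> c ` P)"
    using disjP PPow finP by (intro card_Un_disjoint[symmetric]) (auto intro: finite_subset)
  also have "\<dots> \<le> card (Pow S)" using PPow finP by (intro card_mono) (auto simp: c_def)
  finally have hP: "2 * card P \<le> 2 ^ card S" using cardc[OF PPow(1)] fin by (simp add: card_Pow)
  have "card Q + card (c ` Q) = card (Q \<union> c ` Q)"
    using disjQ PPow finP by (intro card_Un_disjoint[symmetric]) (auto intro: finite_subset)
  also have "\<dots> \<le> card (Pow S)" using PPow finP by (intro card_mono) (auto simp: c_def)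
  finally have hQ: "2 * card Q \<le> 2 ^ card S" using cardc[OF PPow(2)] fin by (simp add: card_Pow)
  have k4: "4 * card (P \<inter> Q) \<le> card P + card Q" by (rule arith_key[OF kl hP hQ]) simp
  have IPQ: "I \<subseteq> P \<inter> Q" unfolding P_def Q_def using IS by auto
  have finPQ: "finite P" "finite Q" using PPow finP by (auto intro: finite_subset)
  have "card I \<le> card (P \<inter> Q)" using IPQ finPQ by (intro card_mono) auto
  moreover have "card (P \<union> Q) + card (P \<inter> Q) = card P + card Q" using finPQ by (rule card_Un_Int[symmetric])
  moreover have "c ` (P \<union> Q) \<subseteq> N"
  proof
    fix Z assume "Z \<in> c ` (P \<union> Q)"
    then obtain Y where Y: "Y \<in> P \<union> Q" "Z = S - Y" unfolding c_def by auto
    show "Z \<in> N"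
    proof (cases "Y \<in> P")
      case True
      then obtain X where "X \<in> I" "X \<subseteq> Y" unfolding P_def by auto
      then show ?thesis unfolding N_def using Y by auto
    next
      case False
      then have "Y \<in> Q" using Y by auto
      then obtain X where "X \<in> I" "Y \<subseteq> X" "X \<subseteq> S" unfolding Q_def using IS by auto
      then have "X \<union> Z = S" using Y by auto
      then show ?thesis unfolding N_def using Y \<open>X \<in> I\<close> by auto
    qed
  qed
  then have "card (c ` (P \<union> Q)) \<le> card N" unfolding N_def using finP by (intro card_mono) auto
  moreover have "card (c ` (P \<union> Q)) = card (P \<union> Q)" using PPow by (intro cardc) auto
  ultimately show ?thesis using k4 unfolding N_def by linarith
qed


theorem theorem1p10:
  fixes n d :: nat and \<A> :: "nat \<Rightarrow> nat set set"
  assumes "\<And>i. i \<in> {1..d} \<Longrightarrow> \<A> i \<subseteq> Pow {1..n}"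
    and "\<And>i j. i \<in> {1..d} \<Longrightarrow> j \<in> {1..d} \<Longrightarrow> i \<noteq> j \<Longrightarrow> cross_IU n (\<A> i) (\<A> j)"
  shows "real (\<Sum>i=1..d. card (\<A> i)) \<le> max (2 ^ n) (real d * 2 ^ n / 4)"
proof -
  define S where "S = {1..n}"
  define U where "U = (\<Union>i\<in>{1..d}. \<A> i)"
  define m where "m X = card ({1..d} \<inter> {i. X \<in> \<A> i})" for X
  define I where "I = {X\<in>U. 2 \<le> m X}"
  define N where "N = {Y\<in>Pow S. \<exists>X\<in>I. X \<inter> Y = {} \<or> X \<union> Y = S}"
  have finS: "finite S" unfolding S_def by simp
  have UPow: "U \<subseteq> Pow S"
  proof
    fix X assume "X \<in> U"
    then obtain i where "i \<in> {1..d}" "X \<in> \<A> i" unfolding U_def by auto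
    then show "X \<in> Pow S" using assms(1) unfolding S_def by blast
  qed
  have finU: "finite U" using UPow finS by (meson finite_Pow_iff finite_subset)
  have IU: "I \<subseteq> U" unfolding I_def by auto
  have bad: "X \<inter> Y \<noteq> {} \<and> X \<union> Y \<noteq> S" if X: "X \<in> I" and Y: "Y \<in> U" for X Y
  proof -
    obtain j where j: "j \<in> {1..d}" "Y \<in> \<A> j" using Y unfolding U_def by auto
    have "\<exists>i\<in>{1..d} \<inter> {i. X \<in> \<A> i}. i \<noteq> j"
    proof (rule ccontr)
      assume "\<not> ?thesis"
      then have "{1..d} \<inter> {i. X \<in> \<A> i} \<subseteq> {j}" by auto
      then have "m X \<le> 1" unfolding m_def using card_mono[of "{j}"] by simp
      then show False using X unfolding I_def by auto
    qed
    then obtain i where i: "i \<in> {1..d}" "X \<in> \<A> i" "i \<noteq> j" by auto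
    have "cross_IU n (\<A> i) (\<A> j)" using assms(2) i j by auto
    then show ?thesis using i j unfolding cross_IU_def S_def by auto
  qed
  have hI: "3 * card I \<le> card N" unfolding N_def
  proof (rule IU_nbhd[OF finS])
    show "I \<subseteq> Pow S" using IU UPow by auto
    show "\<And>X Y. X \<in> I \<Longrightarrow> Y \<in> I \<Longrightarrow> X \<inter> Y \<noteq> {} \<and> X \<union> Y \<noteq> S" using bad IU by auto
  qed
  have UN: "U \<inter> N = {}"
  proof (rule ccontr)
    assume "U \<inter> N \<noteq> {}"
    then obtain Y X where "Y \<in> U" "X \<in> I" "X \<inter> Y = {} \<or> X \<union> Y = S" unfolding N_def by auto
    then show False using bad by blast
  qed
  have "card U + card N = card (U \<union> N)"
    using UN finU finS by (intro card_Un_disjoint[symmetric]) (auto simp: N_def)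
  also have "\<dots> \<le> card (Pow S)" using UPow finS by (intro card_mono) (auto simp: N_def)
  also have "\<dots> = 2 ^ n" using finS by (simp add: card_Pow S_def)
  finally have hU: "card U + card N \<le> 2 ^ n" .
  have cU: "card U = card I + card (U - I)"
  proof -
    have "finite I" using IU finU finite_subset by blast
    then have "card (U - I) = card U - card I" using IU by (rule card_Diff_subset)
    moreover have "card I \<le> card U" using IU finU by (rule card_mono[rotated])
    ultimately show ?thesis by simp
  qed
  have "(\<Sum>i=1..d. card (\<A> i)) = (\<Sum>i=1..d. \<Sum>X\<in>U. of_bool (X \<in> \<A> i))"
  proof (rule sum.cong)
    fix i assume "i \<in> {1..d}"
    then have "\<A> i \<subseteq> U" unfolding U_def by auto
    then have "U \<inter> {X. X \<in> \<A> i} = \<A> i" by auto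
    then show "card (\<A> i) = (\<Sum>X\<in>U. of_bool (X \<in> \<A> i))" using finU by simp
  qed simp
  also have "\<dots> = (\<Sum>X\<in>U. \<Sum>i=1..d. of_bool (X \<in> \<A> i))" by (rule sum.swap)
  also have "\<dots> = (\<Sum>X\<in>U. m X)" unfolding m_def by simp
  also have "\<dots> = (\<Sum>X\<in>I. m X) + (\<Sum>X\<in>U - I. m X)"
    using IU finU by (metis sum.subset_diff add.commute)
  also have "\<dots> \<le> (\<Sum>X\<in>I. d) + (\<Sum>X\<in>U - I. 1)"
  proof (intro add_mono sum_mono)
    fix X assume "X \<in> I"
    show "m X \<le> d" unfolding m_def using card_mono[of "{1..d}" "{1..d} \<inter> {i. X \<in> \<A> i}"] by simp
  next
    fix X assume "X \<in> U - I"
    then show "m X \<le> 1" unfolding I_def by auto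
  qed
  also have "\<dots> = d * card I + card (U - I)" by simp
  finally have hsum: "(\<Sum>i=1..d. card (\<A> i)) \<le> d * card I + card (U - I)" .
  have r1: "real (\<Sum>i=1..d. card (\<A> i)) \<le> real d * real (card I) + real (card (U - I))"
    using hsum by (metis of_nat_add of_nat_le_iff of_nat_mult)
  have r2: "real (card I) + real (card (U - I)) + real (card N) \<le> 2 ^ n" using hU cU
    by (metis of_nat_add of_nat_le_iff of_nat_numeral of_nat_power)
  have r3: "3 * real (card I) \<le> real (card N)" using hI by (metis of_nat_le_iff of_nat_mult of_nat_numeral)
  show ?thesis
  proof (cases "d \<le> 4")
    case True
    have "real d * real (card I) \<le> 4 * real (card I)" using True by (intro mult_right_mono) auto
    then show ?thesis using r1 r2 r3 by linarith
  next
    case False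
    have "4 * real (card I) \<le> 2 ^ n" using r2 r3 by linarith
    then have "(real d - 4) * (4 * real (card I)) \<le> (real d - 4) * 2 ^ n" using False
      by (intro mult_left_mono) auto
    then have "real d * real (card I) * 4 \<le> 16 * real (card I) + real d * 2 ^ n - 4 * 2 ^ n"
      by (simp add: algebra_simps)
    then show ?thesis using r1 r2 r3 by (simp add: field_simps)
  qed
qed

end
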